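(* Let $H$ be a finite group and $G$ a finitely generated group with finite generating set $S_G$; give $H\wr G$ the word length with respect to $(H\setminus\{1\})\cup S_G$, and let $K$ be the kernel of the projection $H\wr G\to G$. Let $r>1$. Then any element of $K$ of length less than $r$ is a product of bulbs indexed by elements of $G$ of length less than $r$.
   Context: Wreath product: $H\wr G$ is the set of pairs $(f,g)$, $f:G\to H$ finitely supported, with $(f_1,g_1)(f_2,g_2)=(f_1\cdot(g_1f_2),g_1g_2)$ where $(gf)(\gamma)=f(g^{-1}\gamma)$; $g\in G$ is identified with $(1,g)$ and $a\in H$ with $(f_a,1)$, $f_a(1)=a$, $f_a(\gamma)=1$ otherwise; the projection is $(f,g)\mapsto g$. For $g\in G$, $a\in H\setminus\{1\}$, $gag^{-1}$ is the $(g,a)$-bulb, a bulb indexed by $g$. Lengths are word lengths with respect to the given generating sets ($S_G$ for elements of $G$). *)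

theory Defs
  imports "HOL-Algebra.Algebra"
begin

text \<open>Wreath product H wr G: pairs (f,g) with g in G and f : G -> H finitely supported
  (f is set to the identity of H outside the carrier of G), with
  (f1,g1)(f2,g2) = (f1 * (g1 f2), g1 g2), where (g f)(gamma) = f(g^-1 gamma).\<close>

definition wreath :: "('h,'c) monoid_scheme \<Rightarrow> ('g,'d) monoid_scheme \<Rightarrow> (('g \<Rightarrow> 'h) \<times> 'g) monoid" where
  "wreath H G =
    \<lparr> carrier = {(f, g). g \<in> carrier G \<and> f \<in> carrier G \<rightarrow> carrier H
                       \<and> (\<forall>\<gamma>. \<gamma> \<notin> carrier G \<longrightarrow> f \<gamma> = \<one>\<^bsub>H\<^esub>)
                       \<and> finite {\<gamma> \<in> carrier G. f \<gamma> \<noteq> \<one>\<^bsub>H\<^esub>}},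
      monoid.mult = (\<lambda>(f1, g1) (f2, g2).
                ((\<lambda>\<gamma>. if \<gamma> \<in> carrier G then f1 \<gamma> \<otimes>\<^bsub>H\<^esub> f2 (inv\<^bsub>G\<^esub> g1 \<otimes>\<^bsub>G\<^esub> \<gamma>) else \<one>\<^bsub>H\<^esub>),
                 g1 \<otimes>\<^bsub>G\<^esub> g2)),
      one = ((\<lambda>\<gamma>. \<one>\<^bsub>H\<^esub>), \<one>\<^bsub>G\<^esub>) \<rparr>"

definition wr_of_G :: "('h,'c) monoid_scheme \<Rightarrow> ('g,'d) monoid_scheme \<Rightarrow> 'g \<Rightarrow> ('g \<Rightarrow> 'h) \<times> 'g" where
  "wr_of_G H G g = ((\<lambda>\<gamma>. \<one>\<^bsub>H\<^esub>), g)"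

definition wr_of_H :: "('h,'c) monoid_scheme \<Rightarrow> ('g,'d) monoid_scheme \<Rightarrow> 'h \<Rightarrow> ('g \<Rightarrow> 'h) \<times> 'g" where
  "wr_of_H H G a = ((\<lambda>\<gamma>. if \<gamma> = \<one>\<^bsub>G\<^esub> then a else \<one>\<^bsub>H\<^esub>), \<one>\<^bsub>G\<^esub>)"

definition bulb :: "('h,'c) monoid_scheme \<Rightarrow> ('g,'d) monoid_scheme \<Rightarrow> 'g \<Rightarrow> 'h \<Rightarrow> ('g \<Rightarrow> 'h) \<times> 'g" where
  "bulb H G g a = wr_of_G H G g \<otimes>\<^bsub>wreath H G\<^esub> wr_of_H H G a
                  \<otimes>\<^bsub>wreath H G\<^esub> inv\<^bsub>wreath H G\<^esub> (wr_of_G H G g)"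

definition wreath_gens :: "('h,'c) monoid_scheme \<Rightarrow> ('g,'d) monoid_scheme \<Rightarrow> 'g set \<Rightarrow> (('g \<Rightarrow> 'h) \<times> 'g) set" where
  "wreath_gens H G S = wr_of_H H G ` (carrier H - {\<one>\<^bsub>H\<^esub>}) \<union> wr_of_G H G ` S"

definition word_length :: "('a,'b) monoid_scheme \<Rightarrow> 'a set \<Rightarrow> 'a \<Rightarrow> nat" where
  "word_length W S x = (LEAST n. \<exists>ws. length ws = n \<and> set ws \<subseteq> S \<union> m_inv W ` S
                                      \<and> foldr (\<otimes>\<^bsub>W\<^esub>) ws \<one>\<^bsub>W\<^esub> = x)"

end

theory Submission
  imports Defs
begin


locale wrctx = GH: group H + GG: group G
  for H :: "('h,'c) monoid_scheme" and G :: "('g,'d) monoid_scheme"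
begin

abbreviation "W \<equiv> wreath H G"

lemma W_mult: "(f1, g1) \<otimes>\<^bsub>W\<^esub> (f2, g2) =
   ((\<lambda>\<gamma>. if \<gamma> \<in> carrier G then f1 \<gamma> \<otimes>\<^bsub>H\<^esub> f2 (inv\<^bsub>G\<^esub> g1 \<otimes>\<^bsub>G\<^esub> \<gamma>) else \<one>\<^bsub>H\<^esub>), g1 \<otimes>\<^bsub>G\<^esub> g2)"
  by (simp add: wreath_def)

lemma W_one: "\<one>\<^bsub>W\<^esub> = ((\<lambda>\<gamma>. \<one>\<^bsub>H\<^esub>), \<one>\<^bsub>G\<^esub>)"
  by (simp add: wreath_def)

lemma W_carrier: "(f, g) \<in> carrier W \<longleftrightarrow> g \<in> carrier G \<and> f \<in> carrier G \<rightarrow> carrier H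
                       \<and> (\<forall>\<gamma>. \<gamma> \<notin> carrier G \<longrightarrow> f \<gamma> = \<one>\<^bsub>H\<^esub>)
                       \<and> finite {\<gamma> \<in> carrier G. f \<gamma> \<noteq> \<one>\<^bsub>H\<^esub>}"
  by (simp add: wreath_def)

lemma W_group: "group W"
proof (rule groupI)
  fix x y assume x: "x \<in> carrier W" and y: "y \<in> carrier W"
  obtain f1 g1 where xe: "x = (f1, g1)" by fastforce
  obtain f2 g2 where ye: "y = (f2, g2)" by fastforce
  have c1: "g1 \<in> carrier G" "f1 \<in> carrier G \<rightarrow> carrier H" "finite {\<gamma> \<in> carrier G. f1 \<gamma> \<noteq> \<one>\<^bsub>H\<^esub>}"
    using x xe W_carrier by auto
  have c2: "g2 \<in> carrier G" "f2 \<in> carrier G \<rightarrow> carrier H" "finite {\<gamma> \<in> carrier G. f2 \<gamma> \<noteq> \<one>\<^bsub>H\<^esub>}"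
    using y ye W_carrier by auto
  let ?F = "\<lambda>\<gamma>. if \<gamma> \<in> carrier G then f1 \<gamma> \<otimes>\<^bsub>H\<^esub> f2 (inv\<^bsub>G\<^esub> g1 \<otimes>\<^bsub>G\<^esub> \<gamma>) else \<one>\<^bsub>H\<^esub>"
  have "{\<gamma> \<in> carrier G. ?F \<gamma> \<noteq> \<one>\<^bsub>H\<^esub>} \<subseteq> {\<gamma> \<in> carrier G. f1 \<gamma> \<noteq> \<one>\<^bsub>H\<^esub>}
       \<union> (\<lambda>\<delta>. g1 \<otimes>\<^bsub>G\<^esub> \<delta>) ` {\<gamma> \<in> carrier G. f2 \<gamma> \<noteq> \<one>\<^bsub>H\<^esub>}"
  proof
    fix \<gamma> assume "\<gamma> \<in> {\<gamma> \<in> carrier G. ?F \<gamma> \<noteq> \<one>\<^bsub>H\<^esub>}"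
    then have g: "\<gamma> \<in> carrier G" and ne: "f1 \<gamma> \<otimes>\<^bsub>H\<^esub> f2 (inv\<^bsub>G\<^esub> g1 \<otimes>\<^bsub>G\<^esub> \<gamma>) \<noteq> \<one>\<^bsub>H\<^esub>" by auto
    show "\<gamma> \<in> {\<gamma> \<in> carrier G. f1 \<gamma> \<noteq> \<one>\<^bsub>H\<^esub>} \<union> (\<lambda>\<delta>. g1 \<otimes>\<^bsub>G\<^esub> \<delta>) ` {\<gamma> \<in> carrier G. f2 \<gamma> \<noteq> \<one>\<^bsub>H\<^esub>}"
    proof (cases "f1 \<gamma> = \<one>\<^bsub>H\<^esub>")
      case True
      then have "f2 (inv\<^bsub>G\<^esub> g1 \<otimes>\<^bsub>G\<^esub> \<gamma>) \<noteq> \<one>\<^bsub>H\<^esub>" using ne c2 g c1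
        by (metis GG.inv_closed GG.m_closed GH.l_one PiE)
      moreover have "\<gamma> = g1 \<otimes>\<^bsub>G\<^esub> (inv\<^bsub>G\<^esub> g1 \<otimes>\<^bsub>G\<^esub> \<gamma>)" using c1 g
        by (simp add: GG.m_assoc[symmetric])
      ultimately show ?thesis using g c1 by blast
    qed (use g in auto)
  qed
  then have fin: "finite {\<gamma> \<in> carrier G. ?F \<gamma> \<noteq> \<one>\<^bsub>H\<^esub>}"
    by (rule finite_subset) (use c1 c2 in auto)
  have "?F \<in> carrier G \<rightarrow> carrier H" using c1 c2 by (auto intro!: GH.m_closed funcset_mem[OF c1(2)] funcset_mem[OF c2(2)])
  then show "x \<otimes>\<^bsub>W\<^esub> y \<in> carrier W"
    using fin c1 c2 by (simp add: xe ye W_mult W_carrier)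
next
  show "\<one>\<^bsub>W\<^esub> \<in> carrier W" by (simp add: W_one W_carrier)
next
  fix x y z assume x: "x \<in> carrier W" and y: "y \<in> carrier W" and z: "z \<in> carrier W"
  obtain f1 g1 where xe: "x = (f1, g1)" by fastforce
  obtain f2 g2 where ye: "y = (f2, g2)" by fastforce
  obtain f3 g3 where ze: "z = (f3, g3)" by fastforce
  have c1: "g1 \<in> carrier G" "f1 \<in> carrier G \<rightarrow> carrier H" using x xe W_carrier by auto
  have c2: "g2 \<in> carrier G" "f2 \<in> carrier G \<rightarrow> carrier H" using y ye W_carrier by auto
  have c3: "g3 \<in> carrier G" "f3 \<in> carrier G \<rightarrow> carrier H" using z ze W_carrier by auto
  show "x \<otimes>\<^bsub>W\<^esub> y \<otimes>\<^bsub>W\<^esub> z = x \<otimes>\<^bsub>W\<^esub> (y \<otimes>\<^bsub>W\<^esub> z)"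
    unfolding xe ye ze W_mult using c1 c2 c3
    by (auto intro!: ext GH.m_assoc funcset_mem[OF c1(2)] funcset_mem[OF c2(2)] funcset_mem[OF c3(2)]
        simp: GG.inv_mult_group GG.m_assoc)
next
  fix x assume x: "x \<in> carrier W"
  obtain f g where xe: "x = (f, g)" by fastforce
  have c: "g \<in> carrier G" "f \<in> carrier G \<rightarrow> carrier H" "\<And>\<gamma>. \<gamma> \<notin> carrier G \<Longrightarrow> f \<gamma> = \<one>\<^bsub>H\<^esub>"
    using x xe W_carrier by auto
  show "\<one>\<^bsub>W\<^esub> \<otimes>\<^bsub>W\<^esub> x = x"
    unfolding xe W_one W_mult using c by (auto intro!: ext simp: funcset_mem[OF c(2)])
next
  fix x assume x: "x \<in> carrier W"
  obtain f g where xe: "x = (f, g)" by fastforce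
  have c: "g \<in> carrier G" "f \<in> carrier G \<rightarrow> carrier H" "finite {\<gamma> \<in> carrier G. f \<gamma> \<noteq> \<one>\<^bsub>H\<^esub>}"
    using x xe W_carrier by auto
  let ?F = "\<lambda>\<gamma>. if \<gamma> \<in> carrier G then inv\<^bsub>H\<^esub> f (g \<otimes>\<^bsub>G\<^esub> \<gamma>) else \<one>\<^bsub>H\<^esub>"
  have "{\<gamma> \<in> carrier G. ?F \<gamma> \<noteq> \<one>\<^bsub>H\<^esub>} \<subseteq> (\<lambda>\<delta>. inv\<^bsub>G\<^esub> g \<otimes>\<^bsub>G\<^esub> \<delta>) ` {\<gamma> \<in> carrier G. f \<gamma> \<noteq> \<one>\<^bsub>H\<^esub>}"
  proof
    fix \<gamma> assume "\<gamma> \<in> {\<gamma> \<in> carrier G. ?F \<gamma> \<noteq> \<one>\<^bsub>H\<^esub>}"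
    then have g: "\<gamma> \<in> carrier G" and ne: "inv\<^bsub>H\<^esub> f (g \<otimes>\<^bsub>G\<^esub> \<gamma>) \<noteq> \<one>\<^bsub>H\<^esub>" by auto
    then have "f (g \<otimes>\<^bsub>G\<^esub> \<gamma>) \<noteq> \<one>\<^bsub>H\<^esub>" by auto
    moreover have "\<gamma> = inv\<^bsub>G\<^esub> g \<otimes>\<^bsub>G\<^esub> (g \<otimes>\<^bsub>G\<^esub> \<gamma>)" using c g
      by (simp add: GG.m_assoc[symmetric])
    ultimately show "\<gamma> \<in> (\<lambda>\<delta>. inv\<^bsub>G\<^esub> g \<otimes>\<^bsub>G\<^esub> \<delta>) ` {\<gamma> \<in> carrier G. f \<gamma> \<noteq> \<one>\<^bsub>H\<^esub>}"
      using g c by blast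
  qed
  then have fin: "finite {\<gamma> \<in> carrier G. ?F \<gamma> \<noteq> \<one>\<^bsub>H\<^esub>}"
    by (rule finite_subset) (use c in auto)
  have "?F \<in> carrier G \<rightarrow> carrier H" using c by (auto intro!: GH.inv_closed funcset_mem[OF c(2)])
  then have yc: "(?F, inv\<^bsub>G\<^esub> g) \<in> carrier W" using fin c by (simp add: W_carrier)
  have "(?F, inv\<^bsub>G\<^esub> g) \<otimes>\<^bsub>W\<^esub> x = \<one>\<^bsub>W\<^esub>"
    unfolding xe W_one W_mult using c
    by (auto intro!: ext GH.l_inv funcset_mem[OF c(2)] simp: GG.m_assoc[symmetric])
  then show "\<exists>y\<in>carrier W. y \<otimes>\<^bsub>W\<^esub> x = \<one>\<^bsub>W\<^esub>" using yc by blast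
qed


end

sublocale wrctx \<subseteq> WW: group "wreath H G" by (rule W_group)

context wrctx begin

lemma wrG_carrier: "g \<in> carrier G \<Longrightarrow> wr_of_G H G g \<in> carrier W"
  by (simp add: wr_of_G_def W_carrier)

lemma wrH_carrier: "a \<in> carrier H \<Longrightarrow> wr_of_H H G a \<in> carrier W"
proof -
  assume a: "a \<in> carrier H"
  have "{\<gamma> \<in> carrier G. (if \<gamma> = \<one>\<^bsub>G\<^esub> then a else \<one>\<^bsub>H\<^esub>) \<noteq> \<one>\<^bsub>H\<^esub>} \<subseteq> {\<one>\<^bsub>G\<^esub>}" by auto
  then have "finite {\<gamma> \<in> carrier G. (if \<gamma> = \<one>\<^bsub>G\<^esub> then a else \<one>\<^bsub>H\<^esub>) \<noteq> \<one>\<^bsub>H\<^esub>}"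
    using finite_subset by blast
  then show ?thesis using a by (auto simp: wr_of_H_def W_carrier)
qed

lemma wrG_mult: "g \<in> carrier G \<Longrightarrow> h \<in> carrier G \<Longrightarrow>
   wr_of_G H G g \<otimes>\<^bsub>W\<^esub> wr_of_G H G h = wr_of_G H G (g \<otimes>\<^bsub>G\<^esub> h)"
  by (auto simp: wr_of_G_def W_mult intro!: ext)

lemma wrG_one: "wr_of_G H G \<one>\<^bsub>G\<^esub> = \<one>\<^bsub>W\<^esub>"
  by (simp add: wr_of_G_def W_one)

lemma wrG_inv: "g \<in> carrier G \<Longrightarrow> inv\<^bsub>W\<^esub> (wr_of_G H G g) = wr_of_G H G (inv\<^bsub>G\<^esub> g)"
  by (rule WW.inv_equality) (simp_all add: wrG_mult wrG_carrier wrG_one)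

lemma wrH_inv: assumes a: "a \<in> carrier H" shows "inv\<^bsub>W\<^esub> (wr_of_H H G a) = wr_of_H H G (inv\<^bsub>H\<^esub> a)"
proof (rule WW.inv_equality)
  show "wr_of_H H G (inv\<^bsub>H\<^esub> a) \<otimes>\<^bsub>W\<^esub> wr_of_H H G a = \<one>\<^bsub>W\<^esub>"
    using a by (auto simp: wr_of_H_def W_mult W_one intro!: ext)
qed (simp_all add: a wrH_carrier)

lemma inv_eq_one_iff: "h \<in> carrier G \<Longrightarrow> \<gamma> \<in> carrier G \<Longrightarrow> (inv\<^bsub>G\<^esub> h \<otimes>\<^bsub>G\<^esub> \<gamma> = \<one>\<^bsub>G\<^esub>) = (\<gamma> = h)"
  by (metis GG.inv_equality GG.inv_inv GG.inv_closed GG.l_inv)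

lemma bulb_eq: "h \<in> carrier G \<Longrightarrow> a \<in> carrier H \<Longrightarrow>
   bulb H G h a = ((\<lambda>\<delta>. if \<delta> = h then a else \<one>\<^bsub>H\<^esub>), \<one>\<^bsub>G\<^esub>)"
  unfolding bulb_def wrG_inv
  by (auto simp: wr_of_G_def wr_of_H_def W_mult inv_eq_one_iff intro!: ext)

lemma wrH_bulb: "a \<in> carrier H \<Longrightarrow> wr_of_H H G a = bulb H G \<one>\<^bsub>G\<^esub> a"
  by (simp add: bulb_eq wr_of_H_def)

lemma bulb_carrier: "h \<in> carrier G \<Longrightarrow> a \<in> carrier H \<Longrightarrow> bulb H G h a \<in> carrier W"
  unfolding bulb_def by (simp add: wrG_carrier wrH_carrier)

lemma bulb_conj: "s \<in> carrier G \<Longrightarrow> h \<in> carrier G \<Longrightarrow> a \<in> carrier H \<Longrightarrow>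
   wr_of_G H G s \<otimes>\<^bsub>W\<^esub> bulb H G h a = bulb H G (s \<otimes>\<^bsub>G\<^esub> h) a \<otimes>\<^bsub>W\<^esub> wr_of_G H G s"
proof -
  assume s: "s \<in> carrier G" and h: "h \<in> carrier G" and a: "a \<in> carrier H"
  have e: "\<And>\<delta>. \<delta> \<in> carrier G \<Longrightarrow> (inv\<^bsub>G\<^esub> s \<otimes>\<^bsub>G\<^esub> \<delta> = h) = (\<delta> = s \<otimes>\<^bsub>G\<^esub> h)"
    using s h by (metis GG.inv_closed GG.inv_solve_left' GG.m_closed)
  show ?thesis
    using s h a by (auto simp: bulb_eq wr_of_G_def W_mult e intro!: ext)
qed

definition Bp :: "('g \<times> 'h) list \<Rightarrow> ('g \<Rightarrow> 'h) \<times> 'g" where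
  "Bp bs = foldr (\<lambda>(g, a) y. bulb H G g a \<otimes>\<^bsub>W\<^esub> y) bs \<one>\<^bsub>W\<^esub>"

lemma Bp_simps: "Bp [] = \<one>\<^bsub>W\<^esub>" "Bp ((h, a) # bs) = bulb H G h a \<otimes>\<^bsub>W\<^esub> Bp bs"
  by (simp_all add: Bp_def)

lemma Bp_carrier: "set bs \<subseteq> carrier G \<times> carrier H \<Longrightarrow> Bp bs \<in> carrier W"
  by (induction bs) (auto simp: Bp_simps bulb_carrier)

lemma Bp_conj: "s \<in> carrier G \<Longrightarrow> set bs \<subseteq> carrier G \<times> carrier H \<Longrightarrow>
   wr_of_G H G s \<otimes>\<^bsub>W\<^esub> Bp bs = Bp (map (\<lambda>(h, a). (s \<otimes>\<^bsub>G\<^esub> h, a)) bs) \<otimes>\<^bsub>W\<^esub> wr_of_G H G s"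
proof (induction bs)
  case Nil
  then show ?case by (simp add: Bp_simps wrG_carrier)
next
  case (Cons b bs)
  obtain h a where b: "b = (h, a)" by fastforce
  have ha: "h \<in> carrier G" "a \<in> carrier H" and bs: "set bs \<subseteq> carrier G \<times> carrier H"
    using Cons.prems b by auto
  have bs': "set (map (\<lambda>(h, a). (s \<otimes>\<^bsub>G\<^esub> h, a)) bs) \<subseteq> carrier G \<times> carrier H"
    using bs Cons.prems by auto
  have "wr_of_G H G s \<otimes>\<^bsub>W\<^esub> Bp (b # bs) = (wr_of_G H G s \<otimes>\<^bsub>W\<^esub> bulb H G h a) \<otimes>\<^bsub>W\<^esub> Bp bs"
    using ha bs Cons.prems
    by (simp add: b Bp_simps WW.m_assoc wrG_carrier bulb_carrier Bp_carrier)
  also have "\<dots> = bulb H G (s \<otimes>\<^bsub>G\<^esub> h) a \<otimes>\<^bsub>W\<^esub> (wr_of_G H G s \<otimes>\<^bsub>W\<^esub> Bp bs)"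
    using ha bs Cons.prems
    by (simp add: bulb_conj WW.m_assoc wrG_carrier bulb_carrier Bp_carrier)
  also have "\<dots> = Bp (map (\<lambda>(h, a). (s \<otimes>\<^bsub>G\<^esub> h, a)) (b # bs)) \<otimes>\<^bsub>W\<^esub> wr_of_G H G s"
    using ha bs bs' Cons.prems Cons.IH
    by (simp add: b Bp_simps WW.m_assoc wrG_carrier bulb_carrier Bp_carrier)
  finally show ?case .
qed

lemma snd_mult: "snd (x \<otimes>\<^bsub>W\<^esub> y) = snd x \<otimes>\<^bsub>G\<^esub> snd y"
  by (cases x, cases y) (simp add: W_mult)

lemma snd_Bp: "set bs \<subseteq> carrier G \<times> carrier H \<Longrightarrow> snd (Bp bs) = \<one>\<^bsub>G\<^esub>"
  by (induction bs) (auto simp: Bp_simps snd_mult bulb_eq W_one)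


end


context wrctx begin
definition gw :: "'g set \<Rightarrow> nat \<Rightarrow> 'g \<Rightarrow> bool" where
  "gw S n h \<longleftrightarrow> (\<exists>u. set u \<subseteq> S \<union> m_inv G ` S \<and> length u < n \<and> foldr (\<otimes>\<^bsub>G\<^esub>) u \<one>\<^bsub>G\<^esub> = h)"

lemma inv_ne_one: "a \<in> carrier H - {\<one>\<^bsub>H\<^esub>} \<Longrightarrow> inv\<^bsub>H\<^esub> a \<in> carrier H - {\<one>\<^bsub>H\<^esub>}"
proof -
  assume a: "a \<in> carrier H - {\<one>\<^bsub>H\<^esub>}"
  have "inv\<^bsub>H\<^esub> a \<noteq> \<one>\<^bsub>H\<^esub>"
  proof
    assume "inv\<^bsub>H\<^esub> a = \<one>\<^bsub>H\<^esub>"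
    then have "inv\<^bsub>H\<^esub> (inv\<^bsub>H\<^esub> a) = \<one>\<^bsub>H\<^esub>" by simp
    then show False using a by simp
  qed
  then show ?thesis using a by simp
qed

lemma letter_cases:
  assumes S: "S \<subseteq> carrier G" and w: "w \<in> wreath_gens H G S \<union> m_inv W ` wreath_gens H G S"
  shows "(\<exists>a \<in> carrier H - {\<one>\<^bsub>H\<^esub>}. w = wr_of_H H G a) \<or> (\<exists>s \<in> S \<union> m_inv G ` S. w = wr_of_G H G s)"
proof -
  consider (c1) "w \<in> wr_of_H H G ` (carrier H - {\<one>\<^bsub>H\<^esub>})" | (c2) "w \<in> wr_of_G H G ` S"
     | (c3) "w \<in> m_inv W ` wr_of_H H G ` (carrier H - {\<one>\<^bsub>H\<^esub>})" | (c4) "w \<in> m_inv W ` wr_of_G H G ` S"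
    using w unfolding wreath_gens_def image_Un Un_iff by argo
  then show ?thesis
  proof cases
    case c1
    then show ?thesis by (intro disjI1) auto
  next
    case c2
    then show ?thesis by (intro disjI2) auto
  next
    case c3
    then obtain y where y: "y \<in> wr_of_H H G ` (carrier H - {\<one>\<^bsub>H\<^esub>})" and wy: "w = inv\<^bsub>W\<^esub> y"
      by (rule imageE)
    from y obtain a where a: "a \<in> carrier H - {\<one>\<^bsub>H\<^esub>}" and ya: "y = wr_of_H H G a"
      by (rule imageE)
    have we: "w = inv\<^bsub>W\<^esub> (wr_of_H H G a)" using wy ya by simp
    have "w = wr_of_H H G (inv\<^bsub>H\<^esub> a)" using a we wrH_inv by simp
    then show ?thesis using inv_ne_one[OF a] by (intro disjI1) (rule bexI)
  next
    case c4
    then obtain s where s: "s \<in> S" and we: "w = inv\<^bsub>W\<^esub> (wr_of_G H G s)" 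
      by (auto simp only: image_iff)
    have "w = wr_of_G H G (inv\<^bsub>G\<^esub> s)" using S s we wrG_inv by auto
    moreover have "inv\<^bsub>G\<^esub> s \<in> S \<union> m_inv G ` S" using s by simp
    ultimately show ?thesis by (intro disjI2) (rule bexI)
  qed
qed

end


context wrctx begin
lemma main:
  assumes S: "S \<subseteq> carrier G"
  shows "set ws \<subseteq> wreath_gens H G S \<union> m_inv W ` wreath_gens H G S \<Longrightarrow>
    \<exists>bs g. g \<in> carrier G \<and> set bs \<subseteq> {(h, a). h \<in> carrier G \<and> a \<in> carrier H - {\<one>\<^bsub>H\<^esub>} \<and> gw S (length ws) h}
       \<and> foldr (\<otimes>\<^bsub>W\<^esub>) ws \<one>\<^bsub>W\<^esub> = Bp bs \<otimes>\<^bsub>W\<^esub> wr_of_G H G g"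
proof (induction ws)
  case Nil
  show ?case
    by (rule exI[of _ "[]"], rule exI[of _ "\<one>\<^bsub>G\<^esub>"]) (simp add: Bp_simps wrG_one WW.l_one WW.one_closed)
next
  case (Cons w ws)
  have wsp: "set ws \<subseteq> wreath_gens H G S \<union> m_inv W ` wreath_gens H G S" using Cons.prems by simp
  from Cons.IH[OF wsp] obtain bs g where g: "g \<in> carrier G"
    and bs: "set bs \<subseteq> {(h, a). h \<in> carrier G \<and> a \<in> carrier H - {\<one>\<^bsub>H\<^esub>} \<and> gw S (length ws) h}"
    and eq: "foldr (\<otimes>\<^bsub>W\<^esub>) ws \<one>\<^bsub>W\<^esub> = Bp bs \<otimes>\<^bsub>W\<^esub> wr_of_G H G g" by blast
  have bsc: "set bs \<subseteq> carrier G \<times> carrier H" using bs by auto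
  have SS: "S \<union> m_inv G ` S \<subseteq> carrier G" using S by auto
  have mono: "gw S (length ws) h \<Longrightarrow> gw S (length (w # ws)) h" for h
    unfolding gw_def by auto
  have "w \<in> wreath_gens H G S \<union> m_inv W ` wreath_gens H G S" using Cons.prems by auto
  from letter_cases[OF S this] show ?case
  proof (elim disjE bexE)
    fix a assume a: "a \<in> carrier H - {\<one>\<^bsub>H\<^esub>}" and w: "w = wr_of_H H G a"
    have "foldr (\<otimes>\<^bsub>W\<^esub>) (w # ws) \<one>\<^bsub>W\<^esub> = Bp ((\<one>\<^bsub>G\<^esub>, a) # bs) \<otimes>\<^bsub>W\<^esub> wr_of_G H G g"
      using a g bsc
      by (simp add: eq w wrH_bulb Bp_simps WW.m_assoc bulb_carrier Bp_carrier wrG_carrier)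
    moreover have "gw S (length (w # ws)) \<one>\<^bsub>G\<^esub>" unfolding gw_def
      by (rule exI[of _ "[]"]) simp
    ultimately show ?thesis using a g bs mono
      by (intro exI[of _ "(\<one>\<^bsub>G\<^esub>, a) # bs"] exI[of _ g]) auto
  next
    fix s assume s: "s \<in> S \<union> m_inv G ` S" and w: "w = wr_of_G H G s"
    have sc: "s \<in> carrier G" using s SS by auto
    let ?bs = "map (\<lambda>(h, a). (s \<otimes>\<^bsub>G\<^esub> h, a)) bs"
    have bsc': "set ?bs \<subseteq> carrier G \<times> carrier H" using bsc sc by auto
    have "foldr (\<otimes>\<^bsub>W\<^esub>) (w # ws) \<one>\<^bsub>W\<^esub> = (wr_of_G H G s \<otimes>\<^bsub>W\<^esub> Bp bs) \<otimes>\<^bsub>W\<^esub> wr_of_G H G g"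
      using sc g bsc by (simp add: eq w WW.m_assoc Bp_carrier wrG_carrier)
    also have "\<dots> = Bp ?bs \<otimes>\<^bsub>W\<^esub> (wr_of_G H G s \<otimes>\<^bsub>W\<^esub> wr_of_G H G g)"
      using sc g bsc bsc' by (simp add: Bp_conj WW.m_assoc Bp_carrier wrG_carrier)
    also have "\<dots> = Bp ?bs \<otimes>\<^bsub>W\<^esub> wr_of_G H G (s \<otimes>\<^bsub>G\<^esub> g)"
      using sc g by (simp add: wrG_mult)
    finally have e: "foldr (\<otimes>\<^bsub>W\<^esub>) (w # ws) \<one>\<^bsub>W\<^esub> = Bp ?bs \<otimes>\<^bsub>W\<^esub> wr_of_G H G (s \<otimes>\<^bsub>G\<^esub> g)" .
    have "set ?bs \<subseteq> {(h, a). h \<in> carrier G \<and> a \<in> carrier H - {\<one>\<^bsub>H\<^esub>} \<and> gw S (length (w # ws)) h}"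
    proof
      fix p assume "p \<in> set ?bs"
      then obtain h a where p: "p = (s \<otimes>\<^bsub>G\<^esub> h, a)" and ha: "(h, a) \<in> set bs" by auto
      then have hc: "h \<in> carrier G" "a \<in> carrier H - {\<one>\<^bsub>H\<^esub>}" and "gw S (length ws) h" using bs by auto
      then obtain u where u: "set u \<subseteq> S \<union> m_inv G ` S" "length u < length ws" "foldr (\<otimes>\<^bsub>G\<^esub>) u \<one>\<^bsub>G\<^esub> = h"
        unfolding gw_def by blast
      have "gw S (length (w # ws)) (s \<otimes>\<^bsub>G\<^esub> h)" unfolding gw_def
        by (rule exI[of _ "s # u"]) (use u s in auto)
      then show "p \<in> {(h, a). h \<in> carrier G \<and> a \<in> carrier H - {\<one>\<^bsub>H\<^esub>} \<and> gw S (length (w # ws)) h}"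
        using p hc sc by auto
    qed
    then show ?thesis using e sc g
      by (intro exI[of _ ?bs] exI[of _ "s \<otimes>\<^bsub>G\<^esub> g"]) auto
  qed
qed

end



lemma (in monoid) foldr_closed': "set u \<subseteq> carrier G \<Longrightarrow> y \<in> carrier G \<Longrightarrow> foldr (\<otimes>) u y \<in> carrier G"
  by (induction u) auto

lemma (in monoid) foldr_mult_gen: "set u \<subseteq> carrier G \<Longrightarrow> y \<in> carrier G \<Longrightarrow> foldr (\<otimes>) u y = foldr (\<otimes>) u \<one> \<otimes> y"
  by (induction u) (auto simp: m_assoc foldr_closed')

lemma (in monoid) foldr_append_mult: "set u \<subseteq> carrier G \<Longrightarrow> set v \<subseteq> carrier G \<Longrightarrow>
   foldr (\<otimes>) (u @ v) \<one> = foldr (\<otimes>) u \<one> \<otimes> foldr (\<otimes>) v \<one>"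
proof -
  assume u: "set u \<subseteq> carrier G" and v: "set v \<subseteq> carrier G"
  have "foldr (\<otimes>) (u @ v) \<one> = foldr (\<otimes>) u (foldr (\<otimes>) v \<one>)" by simp
  also have "\<dots> = foldr (\<otimes>) u \<one> \<otimes> foldr (\<otimes>) v \<one>"
    by (rule foldr_mult_gen[OF u foldr_closed'[OF v one_closed]])
  finally show ?thesis .
qed

context wrctx begin

lemma gword:
  assumes S: "S \<subseteq> carrier G"
  shows "g \<in> generate G S \<Longrightarrow> \<exists>u. set u \<subseteq> S \<union> m_inv G ` S \<and> foldr (\<otimes>\<^bsub>G\<^esub>) u \<one>\<^bsub>G\<^esub> = g"
proof (induction rule: generate.induct)
  case one
  show ?case by (rule exI[of _ "[]"]) simp
next
  case (incl h)
  show ?case by (rule exI[of _ "[h]"]) (use incl S in auto)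
next
  case (inv h)
  show ?case by (rule exI[of _ "[inv\<^bsub>G\<^esub> h]"]) (use inv S in auto)
next
  case (eng h1 h2)
  from eng.IH obtain u1 u2 where u: "set u1 \<subseteq> S \<union> m_inv G ` S" "foldr (\<otimes>\<^bsub>G\<^esub>) u1 \<one>\<^bsub>G\<^esub> = h1"
    "set u2 \<subseteq> S \<union> m_inv G ` S" "foldr (\<otimes>\<^bsub>G\<^esub>) u2 \<one>\<^bsub>G\<^esub> = h2" by blast
  have SS: "S \<union> m_inv G ` S \<subseteq> carrier G" using S by auto
  have e: "foldr (\<otimes>\<^bsub>G\<^esub>) (u1 @ u2) \<one>\<^bsub>G\<^esub> = h1 \<otimes>\<^bsub>G\<^esub> h2"
    using GG.foldr_append_mult[of u1 u2] u SS by (simp only: subset_trans)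
  show ?case using u e
    by (intro exI[of _ "u1 @ u2"]) auto
qed

definition isw :: "'g set \<Rightarrow> ('g \<Rightarrow> 'h) \<times> 'g \<Rightarrow> bool" where
  "isw S y \<longleftrightarrow> (\<exists>ws. set ws \<subseteq> wreath_gens H G S \<union> m_inv W ` wreath_gens H G S
                     \<and> foldr (\<otimes>\<^bsub>W\<^esub>) ws \<one>\<^bsub>W\<^esub> = y)"

lemma gens_carrier: "S \<subseteq> carrier G \<Longrightarrow> wreath_gens H G S \<union> m_inv W ` wreath_gens H G S \<subseteq> carrier W"
proof -
  assume S: "S \<subseteq> carrier G"
  have "wreath_gens H G S \<subseteq> carrier W"
    unfolding wreath_gens_def using S by (blast intro: wrH_carrier wrG_carrier)
  then show ?thesis by auto
qed

lemma isw_mult: "S \<subseteq> carrier G \<Longrightarrow> isw S a \<Longrightarrow> isw S b \<Longrightarrow> isw S (a \<otimes>\<^bsub>W\<^esub> b)"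
proof -
  assume S: "S \<subseteq> carrier G" and "isw S a" "isw S b"
  then obtain u v where u: "set u \<subseteq> wreath_gens H G S \<union> m_inv W ` wreath_gens H G S"
     "foldr (\<otimes>\<^bsub>W\<^esub>) u \<one>\<^bsub>W\<^esub> = a"
    and v: "set v \<subseteq> wreath_gens H G S \<union> m_inv W ` wreath_gens H G S"
     "foldr (\<otimes>\<^bsub>W\<^esub>) v \<one>\<^bsub>W\<^esub> = b"
    unfolding isw_def by blast
  have "set u \<subseteq> carrier W" "set v \<subseteq> carrier W" using u v gens_carrier[OF S] by blast+
  then have "foldr (\<otimes>\<^bsub>W\<^esub>) (u @ v) \<one>\<^bsub>W\<^esub> = a \<otimes>\<^bsub>W\<^esub> b"
    using u v WW.foldr_append_mult[of u v] by (simp only:)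
  then show ?thesis unfolding isw_def using u v by (intro exI[of _ "u @ v"]) auto
qed

lemma foldr_wrG: "set u \<subseteq> carrier G \<Longrightarrow>
   foldr (\<otimes>\<^bsub>W\<^esub>) (map (wr_of_G H G) u) \<one>\<^bsub>W\<^esub> = wr_of_G H G (foldr (\<otimes>\<^bsub>G\<^esub>) u \<one>\<^bsub>G\<^esub>)"
  by (induction u) (auto simp: wrG_one wrG_mult GG.foldr_closed')

lemma isw_G: assumes S: "S \<subseteq> carrier G" and gen: "generate G S = carrier G"
  and g: "g \<in> carrier G" shows "isw S (wr_of_G H G g)"
proof -
  obtain u where u: "set u \<subseteq> S \<union> m_inv G ` S" "foldr (\<otimes>\<^bsub>G\<^esub>) u \<one>\<^bsub>G\<^esub> = g"
    using gword[OF S] g gen by blast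
  have uc: "set u \<subseteq> carrier G" using u S by auto
  have "set (map (wr_of_G H G) u) \<subseteq> wreath_gens H G S \<union> m_inv W ` wreath_gens H G S"
  proof
    fix w assume "w \<in> set (map (wr_of_G H G) u)"
    then obtain s where s: "s \<in> set u" and w: "w = wr_of_G H G s" by auto
    then have "s \<in> S \<or> (\<exists>t \<in> S. s = inv\<^bsub>G\<^esub> t)" using u by auto
    then show "w \<in> wreath_gens H G S \<union> m_inv W ` wreath_gens H G S"
    proof
      assume "s \<in> S" then show ?thesis using w unfolding wreath_gens_def by auto
    next
      assume "\<exists>t \<in> S. s = inv\<^bsub>G\<^esub> t"
      then obtain t where t: "t \<in> S" "s = inv\<^bsub>G\<^esub> t" by blast
      then have "w = inv\<^bsub>W\<^esub> (wr_of_G H G t)" using w S wrG_inv by auto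
      moreover have "wr_of_G H G t \<in> wreath_gens H G S" using t unfolding wreath_gens_def by auto
      ultimately show ?thesis by blast
    qed
  qed
  then show ?thesis unfolding isw_def using foldr_wrG[OF uc] u by blast
qed

lemma isw_H: assumes a: "a \<in> carrier H" shows "isw S (wr_of_H H G a)"
proof (cases "a = \<one>\<^bsub>H\<^esub>")
  case True
  have "wr_of_H H G a = \<one>\<^bsub>W\<^esub>" using True by (auto simp: wr_of_H_def W_one)
  then show ?thesis unfolding isw_def by (intro exI[of _ "[]"]) auto
next
  case False
  have "wr_of_H H G a \<in> wreath_gens H G S" using a False unfolding wreath_gens_def by auto
  then show ?thesis unfolding isw_def using wrH_carrier[OF a]
    by (intro exI[of _ "[wr_of_H H G a]"]) auto
qed

lemma isw_bulb: assumes S: "S \<subseteq> carrier G" and gen: "generate G S = carrier G"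
  and h: "h \<in> carrier G" and a: "a \<in> carrier H" shows "isw S (bulb H G h a)"
  unfolding bulb_def wrG_inv[OF h]
  by (intro isw_mult isw_G isw_H S gen h a GG.inv_closed)

lemma isw_restr: assumes S: "S \<subseteq> carrier G" and gen: "generate G S = carrier G"
  and f: "f \<in> carrier G \<rightarrow> carrier H"
  shows "finite A \<Longrightarrow> A \<subseteq> carrier G \<Longrightarrow> isw S ((\<lambda>\<delta>. if \<delta> \<in> A then f \<delta> else \<one>\<^bsub>H\<^esub>), \<one>\<^bsub>G\<^esub>)"
proof (induction A rule: finite_induct)
  case empty
  have "((\<lambda>\<delta>. if \<delta> \<in> {} then f \<delta> else \<one>\<^bsub>H\<^esub>), \<one>\<^bsub>G\<^esub>) = \<one>\<^bsub>W\<^esub>" by (simp add: W_one)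
  then show ?case unfolding isw_def by (intro exI[of _ "[]"]) auto
next
  case (insert \<gamma> A)
  have \<gamma>: "\<gamma> \<in> carrier G" and A: "A \<subseteq> carrier G" using insert.prems by auto
  have fg: "f \<gamma> \<in> carrier H" using f \<gamma> by auto
  have "((\<lambda>\<delta>. if \<delta> \<in> insert \<gamma> A then f \<delta> else \<one>\<^bsub>H\<^esub>), \<one>\<^bsub>G\<^esub>)
      = bulb H G \<gamma> (f \<gamma>) \<otimes>\<^bsub>W\<^esub> ((\<lambda>\<delta>. if \<delta> \<in> A then f \<delta> else \<one>\<^bsub>H\<^esub>), \<one>\<^bsub>G\<^esub>)"
    using \<gamma> A fg insert.hyps(2) f
    by (auto simp: bulb_eq W_mult subsetD[OF A] funcset_mem[OF f] intro!: ext)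
  moreover have "isw S (bulb H G \<gamma> (f \<gamma>))" by (rule isw_bulb[OF S gen \<gamma> fg])
  ultimately show ?case using insert.IH A isw_mult[OF S] by metis
qed

lemma isw_kernel: assumes S: "S \<subseteq> carrier G" and gen: "generate G S = carrier G"
  and x: "x \<in> kernel W G snd" shows "isw S x"
proof -
  obtain f g where xe: "x = (f, g)" by fastforce
  have c: "g = \<one>\<^bsub>G\<^esub>" "f \<in> carrier G \<rightarrow> carrier H" "\<And>\<gamma>. \<gamma> \<notin> carrier G \<Longrightarrow> f \<gamma> = \<one>\<^bsub>H\<^esub>"
      "finite {\<gamma> \<in> carrier G. f \<gamma> \<noteq> \<one>\<^bsub>H\<^esub>}"
    using x xe unfolding kernel_def by (auto simp: W_carrier)
  let ?A = "{\<gamma> \<in> carrier G. f \<gamma> \<noteq> \<one>\<^bsub>H\<^esub>}"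
  have "f = (\<lambda>\<delta>. if \<delta> \<in> ?A then f \<delta> else \<one>\<^bsub>H\<^esub>)" using c by (auto intro!: ext)
  then have "x = ((\<lambda>\<delta>. if \<delta> \<in> ?A then f \<delta> else \<one>\<^bsub>H\<^esub>), \<one>\<^bsub>G\<^esub>)" using xe c by simp
  then show ?thesis using isw_restr[OF S gen c(2) c(4)] by auto
qed

end



theorem lemma3p2:
  fixes H :: "('h,'c) monoid_scheme" and G :: "('g,'d) monoid_scheme"
    and S :: "'g set" and r :: real and x :: "('g \<Rightarrow> 'h) \<times> 'g"
  assumes "group H" and "finite (carrier H)"
    and "group G" and "finite S" and "S \<subseteq> carrier G" and "generate G S = carrier G"
    and "r > 1"
    and "x \<in> kernel (wreath H G) G snd"
    and "real (word_length (wreath H G) (wreath_gens H G S) x) < r"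
  shows "\<exists>bs. set bs \<subseteq> {(g, a). g \<in> carrier G \<and> a \<in> carrier H - {\<one>\<^bsub>H\<^esub>}
                              \<and> real (word_length G S g) < r}
            \<and> foldr (\<lambda>(g, a) y. bulb H G g a \<otimes>\<^bsub>wreath H G\<^esub> y) bs \<one>\<^bsub>wreath H G\<^esub> = x"
proof -
  interpret wrctx H G by (intro wrctx.intro assms(1) assms(3))
  have isw: "isw S x" by (rule isw_kernel[OF assms(5) assms(6) assms(8)])
  let ?X = "wreath_gens H G S \<union> m_inv (wreath H G) ` wreath_gens H G S"
  let ?P = "\<lambda>n. \<exists>ws. length ws = n \<and> set ws \<subseteq> ?X \<and> foldr (\<otimes>\<^bsub>wreath H G\<^esub>) ws \<one>\<^bsub>wreath H G\<^esub> = x"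
  from isw obtain ws0 where "set ws0 \<subseteq> ?X" "foldr (\<otimes>\<^bsub>wreath H G\<^esub>) ws0 \<one>\<^bsub>wreath H G\<^esub> = x"
    unfolding isw_def by blast
  then have "?P (length ws0)" by blast
  then have "?P (Least ?P)" by (rule LeastI)
  then obtain ws where ws: "length ws = word_length (wreath H G) (wreath_gens H G S) x" "set ws \<subseteq> ?X"
    "foldr (\<otimes>\<^bsub>wreath H G\<^esub>) ws \<one>\<^bsub>wreath H G\<^esub> = x"
    unfolding word_length_def by blast
  from main[OF assms(5) ws(2)] obtain bs g where g: "g \<in> carrier G"
    and bs: "set bs \<subseteq> {(h, a). h \<in> carrier G \<and> a \<in> carrier H - {\<one>\<^bsub>H\<^esub>} \<and> gw S (length ws) h}"
    and eq: "foldr (\<otimes>\<^bsub>wreath H G\<^esub>) ws \<one>\<^bsub>wreath H G\<^esub> = Bp bs \<otimes>\<^bsub>wreath H G\<^esub> wr_of_G H G g"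
    by blast
  have bsc: "set bs \<subseteq> carrier G \<times> carrier H" using bs by auto
  have "snd x = \<one>\<^bsub>G\<^esub>" using assms(8) by (simp add: kernel_def)
  moreover have "snd x = g" using eq ws(3) snd_mult snd_Bp[OF bsc] g
    by (simp add: wr_of_G_def)
  ultimately have g1: "g = \<one>\<^bsub>G\<^esub>" by simp
  have xB: "x = Bp bs" using eq ws(3) g1 wrG_one Bp_carrier[OF bsc] by simp
  show ?thesis
  proof (intro exI conjI)
    show "foldr (\<lambda>(g, a) y. bulb H G g a \<otimes>\<^bsub>wreath H G\<^esub> y) bs \<one>\<^bsub>wreath H G\<^esub> = x"
      using xB by (simp add: Bp_def)
    show "set bs \<subseteq> {(g, a). g \<in> carrier G \<and> a \<in> carrier H - {\<one>\<^bsub>H\<^esub>} \<and> real (word_length G S g) < r}"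
    proof
      fix p assume p: "p \<in> set bs"
      obtain h a where pe: "p = (h, a)" by fastforce
      have h: "h \<in> carrier G" "a \<in> carrier H - {\<one>\<^bsub>H\<^esub>}" "gw S (length ws) h" using bs p pe by auto
      then obtain u where u: "set u \<subseteq> S \<union> m_inv G ` S" "length u < length ws" "foldr (\<otimes>\<^bsub>G\<^esub>) u \<one>\<^bsub>G\<^esub> = h"
        unfolding gw_def by blast
      have "word_length G S h \<le> length u" unfolding word_length_def
        by (rule Least_le) (use u in blast)
      then have "real (word_length G S h) < r" using u(2) ws(1) assms(9) by linarith
      then show "p \<in> {(g, a). g \<in> carrier G \<and> a \<in> carrier H - {\<one>\<^bsub>H\<^esub>} \<and> real (word_length G S g) < r}"
        using pe h by auto
    qed
  qed
qed


end
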